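(* Let $\mu_Y\in\mathbb{R}$, $\sigma_Y>0$, $n\ge 2$, and let $X_1,\dots,X_n$ be i.i.d. with $X_i\sim LN(\mu_Y,\sigma_Y^2)$. With $A_n=\frac1n\sum_{i=1}^n X_i$ and $H_n=n\big/\sum_{i=1}^n (1/X_i)$, define $\hat k_n=\frac{n}{n-1}\left(\frac{A_n}{H_n}-1\right)$. Then $\hat k_n$ is an unbiased estimator of $k=C_v^2=\exp(\sigma_Y^2)-1$, i.e. $E(\hat k_n)=k=C_v^2$.
   Context: $X\sim LN(\mu_Y,\sigma_Y^2)$ means $\ln X\sim N(\mu_Y,\sigma_Y^2)$. For such $X$, $C_v=\sqrt{\operatorname{Var}(X)}/E[X]$ is the coefficient of variation, and $k=E[X]\,E[1/X]-1$ is the relative ratio of arithmetic to harmonic mean; one has $k=C_v^2=\exp(\sigma_Y^2)-1$. *)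

theory Defs
  imports "HOL-Probability.Probability"
begin

definition lognormal_rv :: "'a measure \<Rightarrow> ('a \<Rightarrow> real) \<Rightarrow> real \<Rightarrow> real \<Rightarrow> bool" where
  "lognormal_rv M X \<mu> \<sigma> \<longleftrightarrow>
     X \<in> borel_measurable M \<and> (AE \<omega> in M. 0 < X \<omega>) \<and>
     distributed M lborel (\<lambda>\<omega>. ln (X \<omega>)) (normal_density \<mu> \<sigma>)"

definition arith_mean :: "nat \<Rightarrow> (nat \<Rightarrow> 'a \<Rightarrow> real) \<Rightarrow> 'a \<Rightarrow> real" where
  "arith_mean n X \<omega> = (\<Sum>i=1..n. X i \<omega>) / real n"

definition harm_mean :: "nat \<Rightarrow> (nat \<Rightarrow> 'a \<Rightarrow> real) \<Rightarrow> 'a \<Rightarrow> real" where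
  "harm_mean n X \<omega> = real n / (\<Sum>i=1..n. 1 / X i \<omega>)"

definition k_hat :: "nat \<Rightarrow> (nat \<Rightarrow> 'a \<Rightarrow> real) \<Rightarrow> 'a \<Rightarrow> real" where
  "k_hat n X \<omega> = real n / (real n - 1) * (arith_mean n X \<omega> / harm_mean n X \<omega> - 1)"

end

theory Submission imports Defs begin

lemma nd_exp_shift:
  assumes "\<sigma> > 0"
  shows "normal_density \<mu> \<sigma> x * exp (t * x) = exp (t*\<mu> + t^2*\<sigma>^2/2) * normal_density (\<mu> + t*\<sigma>^2) \<sigma> x"
proof -
  have "-(x - \<mu>)\<^sup>2/ (2 * \<sigma>\<^sup>2) + t * x = (t*\<mu> + t^2*\<sigma>^2/2) + (-(x - (\<mu> + t*\<sigma>^2))\<^sup>2/ (2 * \<sigma>\<^sup>2))"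
    using assms by (simp add: field_simps power2_eq_square)
  then have "exp (-(x - \<mu>)\<^sup>2/ (2 * \<sigma>\<^sup>2)) * exp (t * x) = exp (t*\<mu> + t^2*\<sigma>^2/2) * exp (-(x - (\<mu> + t*\<sigma>^2))\<^sup>2/ (2 * \<sigma>\<^sup>2))"
    by (metis exp_add)
  then show ?thesis unfolding normal_density_def by (simp add: mult_ac)
qed

lemma lognormal_mgf:
  assumes P: "prob_space M" and s: "\<sigma> > 0" and L: "lognormal_rv M X \<mu> \<sigma>"
  shows "integrable M (\<lambda>\<omega>. exp (t * ln (X \<omega>)))"
    and "(\<integral>\<omega>. exp (t * ln (X \<omega>)) \<partial>M) = exp (t*\<mu> + t^2*\<sigma>^2/2)"
proof -
  have D: "distributed M lborel (\<lambda>\<omega>. ln (X \<omega>)) (normal_density \<mu> \<sigma>)"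
    using L unfolding lognormal_rv_def by auto
  have eq: "(\<lambda>x. normal_density \<mu> \<sigma> x * exp (t * x)) = (\<lambda>x. exp (t*\<mu> + t^2*\<sigma>^2/2) * normal_density (\<mu> + t*\<sigma>^2) \<sigma> x)"
    using nd_exp_shift[OF s] by auto
  have "integrable lborel (\<lambda>x. normal_density \<mu> \<sigma> x * exp (t * x))"
    unfolding eq using integrable_normal_density[OF s] by simp
  then show "integrable M (\<lambda>\<omega>. exp (t * ln (X \<omega>)))"
    using distributed_integrable[OF D, of "\<lambda>x. exp (t * x)"] by simp
  have "(\<integral>\<omega>. exp (t * ln (X \<omega>)) \<partial>M) = (\<integral>x. normal_density \<mu> \<sigma> x * exp (t * x) \<partial>lborel)"
    using distributed_integral[OF D, of "\<lambda>x. exp (t * x)"] by simp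
  also have "\<dots> = exp (t*\<mu> + t^2*\<sigma>^2/2)" unfolding eq using integral_normal_density[OF s] by simp
  finally show "(\<integral>\<omega>. exp (t * ln (X \<omega>)) \<partial>M) = exp (t*\<mu> + t^2*\<sigma>^2/2)" .
qed

lemma lognormal_AE_mgf:
  assumes P: "prob_space M" and s: "\<sigma> > 0" and L: "lognormal_rv M X \<mu> \<sigma>"
    and f: "f \<in> borel_measurable M"
    and fe: "\<And>\<omega>. 0 < X \<omega> \<Longrightarrow> f \<omega> = exp (t * ln (X \<omega>))"
  shows "integrable M f" and "integral\<^sup>L M f = exp (t*\<mu> + t^2*\<sigma>^2/2)"
proof -
  have Xm[measurable]: "X \<in> borel_measurable M" using L unfolding lognormal_rv_def by auto
  have pos: "AE \<omega> in M. 0 < X \<omega>" using L unfolding lognormal_rv_def by auto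
  have AE: "AE \<omega> in M. exp (t * ln (X \<omega>)) = f \<omega>"
    using pos by eventually_elim (simp add: fe)
  show "integrable M f"
    by (rule integrable_cong_AE_imp[OF lognormal_mgf(1)[OF P s L] f AE])
  have "integral\<^sup>L M f = (\<integral>\<omega>. exp (t * ln (X \<omega>)) \<partial>M)"
    by (rule integral_cong_AE[OF f _ AE[THEN AE_mp, OF AE_I2]]) auto
  then show "integral\<^sup>L M f = exp (t*\<mu> + t^2*\<sigma>^2/2)" using lognormal_mgf(2)[OF P s L] by simp
qed

lemma pair_moment:
  assumes P: "prob_space M" and s: "\<sigma>Y > 0"
    and ind: "prob_space.indep_vars M (\<lambda>_. borel) X {1..n}"
    and L: "\<And>i. i \<in> {1..n} \<Longrightarrow> lognormal_rv M (X i) \<mu>Y \<sigma>Y"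
    and ij: "i \<in> {1..n}" "j \<in> {1..n}"
  shows "integrable M (\<lambda>\<omega>. X i \<omega> * (1 / X j \<omega>))
    \<and> (\<integral>\<omega>. X i \<omega> * (1 / X j \<omega>) \<partial>M) = (if i = j then 1 else exp (\<sigma>Y\<^sup>2))"
proof -
  interpret prob_space M by fact
  have Xm[measurable]: "X k \<in> borel_measurable M" if "k \<in> {1..n}" for k
    using L[OF that] unfolding lognormal_rv_def by auto
  show ?thesis
  proof (cases "i = j")
    case True
    have "integrable M (\<lambda>\<omega>. X i \<omega> * (1 / X j \<omega>)) \<and>
      (\<integral>\<omega>. X i \<omega> * (1 / X j \<omega>) \<partial>M) = exp (0*\<mu>Y + 0^2*\<sigma>Y^2/2)"
      using lognormal_AE_mgf[OF P s L[OF ij(1)], of "\<lambda>\<omega>. X i \<omega> * (1 / X j \<omega>)" 0]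
      using True ij by auto
    then show ?thesis using True by simp
  next
    case False
    have I1: "integrable M (X i)" and E1: "integral\<^sup>L M (X i) = exp (1*\<mu>Y + 1^2*\<sigma>Y^2/2)"
      using lognormal_AE_mgf[OF P s L[OF ij(1)], of "X i" 1] ij by auto
    have I2: "integrable M (\<lambda>\<omega>. 1 / X j \<omega>)" and E2: "(\<integral>\<omega>. 1 / X j \<omega> \<partial>M) = exp ((-1)*\<mu>Y + (-1)^2*\<sigma>Y^2/2)"
      using lognormal_AE_mgf[OF P s L[OF ij(2)], of "\<lambda>\<omega>. 1 / X j \<omega>" "-1"] ij
      by (auto simp: exp_minus field_simps)
    have "indep_var (Pi\<^sub>M {i} (\<lambda>_. borel)) (\<lambda>\<omega>. restrict (\<lambda>k. X k \<omega>) {i})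
       (Pi\<^sub>M {j} (\<lambda>_. borel)) (\<lambda>\<omega>. restrict (\<lambda>k. X k \<omega>) {j})"
      using ind ij False by (intro indep_var_restrict) auto
    then have "indep_var borel ((\<lambda>f. f i) \<circ> (\<lambda>\<omega>. restrict (\<lambda>k. X k \<omega>) {i}))
       borel ((\<lambda>f. 1 / f j) \<circ> (\<lambda>\<omega>. restrict (\<lambda>k. X k \<omega>) {j}))"
      by (rule indep_var_compose) auto
    also have "((\<lambda>f. f i) \<circ> (\<lambda>\<omega>. restrict (\<lambda>k. X k \<omega>) {i})) = X i" by auto
    also have "((\<lambda>f. 1 / f j) \<circ> (\<lambda>\<omega>. restrict (\<lambda>k. X k \<omega>) {j})) = (\<lambda>\<omega>. 1 / X j \<omega>)" by auto
    finally have IV: "indep_var borel (X i) borel (\<lambda>\<omega>. 1 / X j \<omega>)" .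
    have "(\<integral>\<omega>. X i \<omega> * (1 / X j \<omega>) \<partial>M) = exp (\<mu>Y + \<sigma>Y^2/2) * exp (-\<mu>Y + \<sigma>Y^2/2)"
      using indep_var_lebesgue_integral[OF IV I1 I2] E1 E2 by simp
    also have "\<dots> = exp (\<sigma>Y^2)" by (simp flip: exp_add)
    finally show ?thesis using indep_var_integrable[OF IV I1 I2] False by simp
  qed
qed

lemma double_sum_if:
  "(\<Sum>i\<in>{1..n}. \<Sum>j\<in>{1..n}. (if i = j then 1 else e::real)) = real n * (1 + (real n - 1) * e)"
proof -
  have "(\<Sum>j\<in>{1..n}. (if i = j then 1 else e)) = real n * e + (1 - e)" if "i \<in> {1..n}" for i
  proof -
    have "(\<Sum>j\<in>{1..n}. (if i = j then 1 else e)) = (\<Sum>j\<in>{1..n}. e + (if i = j then 1 - e else 0))"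
      by (rule sum.cong) auto
    also have "\<dots> = real n * e + (1 - e)" using that by (simp add: sum.distrib)
    finally show ?thesis .
  qed
  then have "(\<Sum>i\<in>{1..n}. \<Sum>j\<in>{1..n}. (if i = j then 1 else e::real)) = (\<Sum>i\<in>{1..n}. real n * e + (1 - e))"
    by (rule sum.cong[OF refl])
  also have "\<dots> = real n * (1 + (real n - 1) * e)" by (simp add: algebra_simps)
  finally show ?thesis .
qed

theorem proposition2:
  fixes M :: "'a measure" and X :: "nat \<Rightarrow> 'a \<Rightarrow> real"
    and \<mu>Y \<sigma>Y :: real and n :: nat
  assumes "prob_space M"
    and "\<sigma>Y > 0" and "n \<ge> 2"
    and "prob_space.indep_vars M (\<lambda>_. borel) X {1..n}"
    and "\<And>i. i \<in> {1..n} \<Longrightarrow> lognormal_rv M (X i) \<mu>Y \<sigma>Y"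
  shows "integrable M (k_hat n X)
    \<and> prob_space.expectation M (k_hat n X) = exp (\<sigma>Y\<^sup>2) - 1
    \<and> exp (\<sigma>Y\<^sup>2) - 1 = prob_space.variance M (X 1) / (prob_space.expectation M (X 1))\<^sup>2"
proof -
  note P = assms(1) and s = assms(2) and n2 = assms(3) and ind = assms(4) and L = assms(5)
  interpret prob_space M by fact
  define e where "e = exp (\<sigma>Y\<^sup>2)"
  define g where "g i j \<omega> = X i \<omega> * (1 / X j \<omega>)" for i j \<omega>
  have PM: "integrable M (g i j) \<and> integral\<^sup>L M (g i j) = (if i = j then 1 else e)"
    if "i \<in> {1..n}" "j \<in> {1..n}" for i j
    using pair_moment[OF P s ind L that] unfolding g_def e_def by simp
  have kh: "k_hat n X = (\<lambda>\<omega>. real n / (real n - 1) * ((\<Sum>i\<in>{1..n}. \<Sum>j\<in>{1..n}. g i j \<omega>) / (real n)^2 - 1))"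
    by (rule ext) (simp add: k_hat_def arith_mean_def harm_mean_def g_def sum_product power2_eq_square)
  have IS: "integrable M (\<lambda>\<omega>. \<Sum>i\<in>{1..n}. \<Sum>j\<in>{1..n}. g i j \<omega>)"
  proof (rule Bochner_Integration.integrable_sum)
    fix i assume i: "i \<in> {1..n}"
    show "integrable M (\<lambda>\<omega>. \<Sum>j\<in>{1..n}. g i j \<omega>)"
      by (rule Bochner_Integration.integrable_sum) (use PM i in auto)
  qed
  have ES: "(\<integral>\<omega>. (\<Sum>i\<in>{1..n}. \<Sum>j\<in>{1..n}. g i j \<omega>) \<partial>M) = real n * (1 + (real n - 1) * e)"
  proof -
    have "(\<integral>\<omega>. (\<Sum>i\<in>{1..n}. \<Sum>j\<in>{1..n}. g i j \<omega>) \<partial>M) = (\<Sum>i\<in>{1..n}. \<Sum>j\<in>{1..n}. integral\<^sup>L M (g i j))"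
    proof -
      have "(\<integral>\<omega>. (\<Sum>i\<in>{1..n}. \<Sum>j\<in>{1..n}. g i j \<omega>) \<partial>M) = (\<Sum>i\<in>{1..n}. (\<integral>\<omega>. (\<Sum>j\<in>{1..n}. g i j \<omega>) \<partial>M))"
        by (rule Bochner_Integration.integral_sum, rule Bochner_Integration.integrable_sum) (use PM in auto)
      also have "\<dots> = (\<Sum>i\<in>{1..n}. \<Sum>j\<in>{1..n}. integral\<^sup>L M (g i j))"
        by (rule sum.cong[OF refl], rule Bochner_Integration.integral_sum) (use PM in auto)
      finally show ?thesis .
    qed
    also have "\<dots> = (\<Sum>i\<in>{1..n}. \<Sum>j\<in>{1..n}. (if i = j then 1 else e))"
      by (rule sum.cong[OF refl], rule sum.cong[OF refl]) (use PM in auto)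
    finally show ?thesis using double_sum_if by simp
  qed
  have I1: "integrable M (k_hat n X)" unfolding kh using IS by auto
  have "expectation (k_hat n X) = real n / (real n - 1) * (real n * (1 + (real n - 1) * e) / (real n)^2 - 1)"
    unfolding kh using IS ES by (simp add: prob_space)
  also have "\<dots> = e - 1" using n2 by (simp add: field_simps power2_eq_square)
  finally have E1: "expectation (k_hat n X) = exp (\<sigma>Y\<^sup>2) - 1" unfolding e_def .
  have one: "1 \<in> {1..n}" using n2 by auto
  have X1m[measurable]: "X 1 \<in> borel_measurable M" using L[OF one] unfolding lognormal_rv_def by auto
  have J1: "integrable M (X 1)" and F1: "integral\<^sup>L M (X 1) = exp (1*\<mu>Y + 1^2*\<sigma>Y^2/2)"
  proof -
    have q: "X 1 \<omega> = exp (1 * ln (X 1 \<omega>))" if "0 < X 1 \<omega>" for \<omega> using that by simp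
    show "integrable M (X 1)" "integral\<^sup>L M (X 1) = exp (1*\<mu>Y + 1^2*\<sigma>Y^2/2)"
      using lognormal_AE_mgf[OF P s L[OF one], of "X 1" 1, OF X1m q] by blast+
  qed
  have J2: "integrable M (\<lambda>\<omega>. (X 1 \<omega>)\<^sup>2)" and F2: "(\<integral>\<omega>. (X 1 \<omega>)\<^sup>2 \<partial>M) = exp (2*\<mu>Y + 2^2*\<sigma>Y^2/2)"
  proof -
    have m2: "(\<lambda>\<omega>. (X 1 \<omega>)\<^sup>2) \<in> borel_measurable M" by measurable
    have sq: "(X 1 \<omega>)\<^sup>2 = exp (2 * ln (X 1 \<omega>))" if "0 < X 1 \<omega>" for \<omega>
    proof -
      have "X 1 \<omega> powr 2 = exp (2 * ln (X 1 \<omega>))" using that by (simp add: powr_def)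
      then show ?thesis using that by (simp add: powr_numeral)
    qed
    show "integrable M (\<lambda>\<omega>. (X 1 \<omega>)\<^sup>2)" "(\<integral>\<omega>. (X 1 \<omega>)\<^sup>2 \<partial>M) = exp (2*\<mu>Y + 2^2*\<sigma>Y^2/2)"
      using lognormal_AE_mgf[OF P s L[OF one], of "\<lambda>\<omega>. (X 1 \<omega>)\<^sup>2" 2, OF m2 sq] by blast+
  qed
  have V: "variance (X 1) = exp (2*\<mu>Y + 2*\<sigma>Y^2) - exp (\<mu>Y + \<sigma>Y^2/2)^2"
    using variance_eq[OF J1 J2] F1 F2 by simp
  have "exp (\<mu>Y + \<sigma>Y^2/2)^2 = exp (2*\<mu>Y + \<sigma>Y^2)"
    by (simp add: power2_eq_square flip: exp_add)
  moreover have "exp (2*\<mu>Y + 2*\<sigma>Y^2) = exp (2*\<mu>Y + \<sigma>Y^2) * exp (\<sigma>Y^2)"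
    by (simp flip: exp_add)
  ultimately have "variance (X 1) / (expectation (X 1))\<^sup>2 = exp (\<sigma>Y\<^sup>2) - 1"
    using V F1 by (simp add: field_simps)
  then show ?thesis using I1 E1 by simp
qed

end
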